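(* Let $1/n\ll\theta,\gamma\ll\tau\leq 1$ and $k\in\mathbb{N}$. Let $G$ be a digraph on $n$ vertices, $\mathcal{Q}$ a path system in $G$, and $\mathcal{P}_k=\{V_{ij}:i,j\in[k]\}$ a $k^2$-partition of $V(G)$. Let $G'$ with partition $\mathcal{P}'_k$ be obtained by contracting $\mathcal{Q}$ in $G$ with respect to $\mathcal{P}_k$. Then $|\mathcal{B}_k(\mathcal{P}'_k,G')|\leq|\mathcal{B}_k(\mathcal{P}_k,G)|$. Moreover, if $\mathcal{P}_k$ is a $(k^2,\tau,\gamma)$-partition of $G$ and $e(\mathcal{Q})\leq\theta n$, then $\mathcal{P}'_k$ is a $(k^2,\tau/2,2\gamma)$-partition of $G'$.
   Context: Hierarchy convention: $x\ll y$ means $x\leq f(y)$ for some implicitly given non-decreasing function; the statement asserts such functions exist, constants chosen from right to left. A path system in $G$ is a set of vertex-disjoint directed paths in $G$; $e(\mathcal{Q})$ is its total number of edges and $V(\mathcal{Q})$ the set of vertices on its paths. A $k^2$-partition of $V(G)$ is a family $\{V_{ij}:i,j\in[k]\}$ of pairwise disjoint (possibly empty) sets with union $V(G)$; $V_{i*}=\bigcup_jV_{ij}$, $V_{*j}=\bigcup_iV_{ij}$; $E(A,B)$ is the set of edges $ab$ with $a\in A,b\in B$; bad edges $\mathcal{B}_k(\mathcal{P}_k,G)=\bigcup_{i\neq j}E(V_{i*},V_{*j})$. A $(k^2,\tau,\gamma)$-partition of an $N$-vertex digraph is a $k^2$-partition with at most $\gamma N^2$ bad edges and $|V_{i*}|,|V_{*j}|\geq\tau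 N$ for all $i,j$. Contraction: for each path $Q\in\mathcal{Q}$, going from $u$ to $v$, create a new vertex $x_Q$. The vertex set of $G'$ is $(V(G)\setminus V(\mathcal{Q}))\cup\{x_Q:Q\in\mathcal{Q}\}$. For $y\in V(G')$ put $y^-=y^+=y$ if $y\in V(G)$, and $x_Q^-=u$, $x_Q^+=v$ if $Q$ goes from $u$ to $v$; then $yz$ is an edge of $G'$ iff $y^+z^-\in E(G)$ (so $x_Q$ inherits the inneighbours of $u$ and the outneighbours of $v$). The resulting partition is $\mathcal{P}'_k=\{V'_{ij}\}$ where $V'_{ij}$ consists of $V_{ij}\setminus V(\mathcal{Q})$ together with all $x_Q$ such that $Q$ goes from $u$ to $v$ with $u\in V_{*j}$ and $v\in V_{i*}$. *)

theory Defs
  imports Complex_Main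
begin

definition digraph :: "'a set \<Rightarrow> ('a \<times> 'a) set \<Rightarrow> bool" where
  "digraph V E \<longleftrightarrow> finite V \<and> E \<subseteq> V \<times> V \<and> (\<forall>v. (v, v) \<notin> E)"

definition dipath :: "'a set \<Rightarrow> ('a \<times> 'a) set \<Rightarrow> 'a list \<Rightarrow> bool" where
  "dipath V E p \<longleftrightarrow> p \<noteq> [] \<and> distinct p \<and> set p \<subseteq> V \<and> successively (\<lambda>x y. (x, y) \<in> E) p"

definition path_system :: "'a set \<Rightarrow> ('a \<times> 'a) set \<Rightarrow> 'a list set \<Rightarrow> bool" where
  "path_system V E Q \<longleftrightarrow> (\<forall>p\<in>Q. dipath V E p) \<and>
     (\<forall>p\<in>Q. \<forall>q\<in>Q. p \<noteq> q \<longrightarrow> set p \<inter> set q = {})"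

definition num_edges :: "'a list set \<Rightarrow> nat" where
  "num_edges Q = (\<Sum>p\<in>Q. length p - 1)"

definition path_verts :: "'a list set \<Rightarrow> 'a set" where
  "path_verts Q = (\<Union>p\<in>Q. set p)"

definition k2_partition :: "nat \<Rightarrow> 'a set \<Rightarrow> (nat \<Rightarrow> nat \<Rightarrow> 'a set) \<Rightarrow> bool" where
  "k2_partition k V P \<longleftrightarrow>
     (\<forall>i\<in>{1..k}. \<forall>j\<in>{1..k}. \<forall>i'\<in>{1..k}. \<forall>j'\<in>{1..k}.
        (i, j) \<noteq> (i', j') \<longrightarrow> P i j \<inter> P i' j' = {}) \<and>
     (\<Union>i\<in>{1..k}. \<Union>j\<in>{1..k}. P i j) = V"

definition row :: "nat \<Rightarrow> (nat \<Rightarrow> nat \<Rightarrow> 'a set) \<Rightarrow> nat \<Rightarrow> 'a set" where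
  "row k P i = (\<Union>j\<in>{1..k}. P i j)"

definition col :: "nat \<Rightarrow> (nat \<Rightarrow> nat \<Rightarrow> 'a set) \<Rightarrow> nat \<Rightarrow> 'a set" where
  "col k P j = (\<Union>i\<in>{1..k}. P i j)"

definition edges_between :: "('a \<times> 'a) set \<Rightarrow> 'a set \<Rightarrow> 'a set \<Rightarrow> ('a \<times> 'a) set" where
  "edges_between E A B = {(a, b) \<in> E. a \<in> A \<and> b \<in> B}"

definition bad_edges :: "nat \<Rightarrow> (nat \<Rightarrow> nat \<Rightarrow> 'a set) \<Rightarrow> ('a \<times> 'a) set \<Rightarrow> ('a \<times> 'a) set" where
  "bad_edges k P E = (\<Union>i\<in>{1..k}. \<Union>j\<in>{1..k}. if i \<noteq> j then edges_between E (row k P i) (col k P j) else {})"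

definition k2_tau_gamma_partition ::
  "nat \<Rightarrow> real \<Rightarrow> real \<Rightarrow> 'a set \<Rightarrow> ('a \<times> 'a) set \<Rightarrow> (nat \<Rightarrow> nat \<Rightarrow> 'a set) \<Rightarrow> bool" where
  "k2_tau_gamma_partition k \<tau> \<gamma> V E P \<longleftrightarrow>
     k2_partition k V P \<and>
     real (card (bad_edges k P E)) \<le> \<gamma> * real (card V) ^ 2 \<and>
     (\<forall>i\<in>{1..k}. real (card (row k P i)) \<ge> \<tau> * real (card V)) \<and>
     (\<forall>j\<in>{1..k}. real (card (col k P j)) \<ge> \<tau> * real (card V))"

text \<open>Contraction. Vertices of G' are Inl v (uncontracted v) or Inr p (the vertex x_p for p in Q).\<close>
definition vminus :: "'a + 'a list \<Rightarrow> 'a" where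
  "vminus y = (case y of Inl v \<Rightarrow> v | Inr p \<Rightarrow> hd p)"

definition vplus :: "'a + 'a list \<Rightarrow> 'a" where
  "vplus y = (case y of Inl v \<Rightarrow> v | Inr p \<Rightarrow> last p)"

definition contract_V :: "'a set \<Rightarrow> 'a list set \<Rightarrow> ('a + 'a list) set" where
  "contract_V V Q = Inl ` (V - path_verts Q) \<union> Inr ` Q"

definition contract_E ::
  "'a set \<Rightarrow> ('a \<times> 'a) set \<Rightarrow> 'a list set \<Rightarrow> (('a + 'a list) \<times> ('a + 'a list)) set" where
  "contract_E V E Q = {(y, z). y \<in> contract_V V Q \<and> z \<in> contract_V V Q \<and> (vplus y, vminus z) \<in> E}"

definition contract_P ::
  "nat \<Rightarrow> (nat \<Rightarrow> nat \<Rightarrow> 'a set) \<Rightarrow> 'a list set \<Rightarrow> nat \<Rightarrow> nat \<Rightarrow> ('a + 'a list) set" where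
  "contract_P k P Q i j = Inl ` (P i j - path_verts Q) \<union>
     Inr ` {p \<in> Q. hd p \<in> col k P j \<and> last p \<in> row k P i}"

end

theory Submission
  imports Defs
begin



lemma row_mem: "y \<in> row k (contract_P k P Q) i \<Longrightarrow> vplus y \<in> row k P i"
  unfolding row_def contract_P_def by (auto simp: vplus_def)

lemma col_mem: "z \<in> col k (contract_P k P Q) j \<Longrightarrow> vminus z \<in> col k P j"
  unfolding col_def contract_P_def by (auto simp: vminus_def)

lemma pv_mem: "p \<in> Q \<Longrightarrow> x \<in> set p \<Longrightarrow> x \<in> path_verts Q"
  unfolding path_verts_def by auto

lemma inj_vplus:
  assumes "path_system V E Q"
  shows "inj_on vplus (contract_V V Q)"
proof (rule inj_onI)
  fix y z assume y: "y \<in> contract_V V Q" and z: "z \<in> contract_V V Q" and e: "vplus y = vplus z"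
  have ne: "\<And>p. p \<in> Q \<Longrightarrow> p \<noteq> []" using assms unfolding path_system_def dipath_def by blast
  have dj: "\<And>p q. p \<in> Q \<Longrightarrow> q \<in> Q \<Longrightarrow> p \<noteq> q \<Longrightarrow> set p \<inter> set q = {}"
    using assms unfolding path_system_def by blast
  show "y = z"
    using y z e ne dj pv_mem[of _ Q "last _"]
    unfolding contract_V_def vplus_def
    by (auto, (metis last_in_set disjoint_iff)+)
qed

lemma inj_vminus:
  assumes "path_system V E Q"
  shows "inj_on vminus (contract_V V Q)"
proof (rule inj_onI)
  fix y z assume y: "y \<in> contract_V V Q" and z: "z \<in> contract_V V Q" and e: "vminus y = vminus z"
  have ne: "\<And>p. p \<in> Q \<Longrightarrow> p \<noteq> []" using assms unfolding path_system_def dipath_def by blast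
  have dj: "\<And>p q. p \<in> Q \<Longrightarrow> q \<in> Q \<Longrightarrow> p \<noteq> q \<Longrightarrow> set p \<inter> set q = {}"
    using assms unfolding path_system_def by blast
  show "y = z"
    using y z e ne dj pv_mem[of _ Q "hd _"]
    unfolding contract_V_def vminus_def
    by (auto, (metis hd_in_set disjoint_iff)+)
qed




lemma part1:
  assumes "digraph V E" "path_system V E Q"
  shows "card (bad_edges k (contract_P k P Q) (contract_E V E Q)) \<le> card (bad_edges k P E)"
proof -
  let ?f = "\<lambda>(y, z). (vplus y, vminus z)"
  let ?V' = "contract_V V Q"
  have sub: "bad_edges k (contract_P k P Q) (contract_E V E Q) \<subseteq> ?V' \<times> ?V'"
    unfolding bad_edges_def edges_between_def contract_E_def by auto
  have inj: "inj_on ?f (?V' \<times> ?V')"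
    using inj_vplus[OF assms(2)] inj_vminus[OF assms(2)] unfolding inj_on_def by auto
  have img: "?f ` bad_edges k (contract_P k P Q) (contract_E V E Q) \<subseteq> bad_edges k P E"
  proof
    fix x assume "x \<in> ?f ` bad_edges k (contract_P k P Q) (contract_E V E Q)"
    then obtain y z i j where "x = (vplus y, vminus z)" "i \<in> {1..k}" "j \<in> {1..k}" "i \<noteq> j"
      "(y, z) \<in> contract_E V E Q" "y \<in> row k (contract_P k P Q) i" "z \<in> col k (contract_P k P Q) j"
      unfolding bad_edges_def edges_between_def by (auto split: if_splits)
    then show "x \<in> bad_edges k P E"
      unfolding bad_edges_def edges_between_def contract_E_def
      using row_mem col_mem by fastforce
  qed
  have fin: "finite (bad_edges k P E)"
  proof (rule finite_subset)
    show "bad_edges k P E \<subseteq> V \<times> V"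
      using assms(1) unfolding bad_edges_def edges_between_def digraph_def by auto
    show "finite (V \<times> V)" using assms(1) unfolding digraph_def by auto
  qed
  show ?thesis
    by (rule card_inj_on_le[OF inj_on_subset[OF inj sub] img fin])
qed

lemma finQ:
  assumes "digraph V E" "path_system V E Q"
  shows "finite Q"
proof -
  have ne: "\<And>p. p \<in> Q \<Longrightarrow> p \<noteq> [] \<and> set p \<subseteq> V" using assms(2) unfolding path_system_def dipath_def by blast
  have dj: "\<And>p q. p \<in> Q \<Longrightarrow> q \<in> Q \<Longrightarrow> p \<noteq> q \<Longrightarrow> set p \<inter> set q = {}"
    using assms(2) unfolding path_system_def by blast
  have "inj_on hd Q"
    by (rule inj_onI) (metis ne dj hd_in_set disjoint_iff)
  moreover have "hd ` Q \<subseteq> V" using ne hd_in_set by blast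
  moreover have "finite V" using assms(1) unfolding digraph_def by auto
  ultimately show ?thesis by (meson finite_imageD finite_subset)
qed

lemma finV':
  assumes "digraph V E" "path_system V E Q"
  shows "finite (contract_V V Q)"
  using finQ[OF assms] assms(1) unfolding contract_V_def digraph_def by auto

lemma cardV'_le:
  assumes "digraph V E" "path_system V E Q"
  shows "card (contract_V V Q) \<le> card V"
proof -
  have ne: "\<And>p. p \<in> Q \<Longrightarrow> p \<noteq> [] \<and> set p \<subseteq> V" using assms(2) unfolding path_system_def dipath_def by blast
  have "vminus ` contract_V V Q \<subseteq> V"
    unfolding contract_V_def vminus_def using ne hd_in_set by fastforce
  then show ?thesis using card_inj_on_le[OF inj_vminus[OF assms(2)]] assms(1) unfolding digraph_def by blast
qed

lemma pv_sub: "path_system V E Q \<Longrightarrow> path_verts Q \<subseteq> V"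
  unfolding path_system_def dipath_def path_verts_def by blast

lemma card_pv:
  assumes "digraph V E" "path_system V E Q"
  shows "card (path_verts Q) \<le> num_edges Q + card Q"
proof -
  have ne: "\<And>p. p \<in> Q \<Longrightarrow> p \<noteq> []" using assms(2) unfolding path_system_def dipath_def by blast
  have "card (path_verts Q) \<le> (\<Sum>p\<in>Q. card (set p))"
    unfolding path_verts_def by (rule card_UN_le[OF finQ[OF assms]])
  also have "\<dots> \<le> (\<Sum>p\<in>Q. (length p - 1) + 1)"
  proof (rule sum_mono)
    fix p assume "p \<in> Q"
    then have "length p \<noteq> 0" using ne by simp
    then show "card (set p) \<le> length p - 1 + 1" using card_length[of p] by linarith
  qed
  also have "\<dots> = num_edges Q + card Q" unfolding num_edges_def sum.distrib by simp
  finally show ?thesis .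
qed

lemma cardV'_ge:
  assumes "digraph V E" "path_system V E Q"
  shows "card V \<le> card (contract_V V Q) + num_edges Q"
proof -
  have fV: "finite V" using assms(1) unfolding digraph_def by auto
  have "card (contract_V V Q) = card (Inl ` (V - path_verts Q) :: ('a + 'a list) set) + card (Inr ` Q :: ('a + 'a list) set)"
    unfolding contract_V_def
    by (subst card_Un_disjoint) (use fV finQ[OF assms] in auto)
  also have "\<dots> = card (V - path_verts Q) + card Q"
    by (simp add: card_image)
  also have "card (V - path_verts Q) = card V - card (path_verts Q)"
    using pv_sub[OF assms(2)] fV by (simp add: card_Diff_subset finite_subset)
  finally show ?thesis using card_pv[OF assms] card_mono[OF fV pv_sub[OF assms(2)]] by linarith
qed



lemma row_bound:
  assumes "digraph V E" "path_system V E Q" "A \<subseteq> V" "B \<subseteq> contract_V V Q"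
    "Inl ` (A - path_verts Q) \<subseteq> B" "Inr ` {p \<in> Q. length p = 1 \<and> hd p \<in> A} \<subseteq> B"
  shows "card A \<le> card B + 2 * num_edges Q"
proof -
  define S where "S = {p \<in> Q. length p = 1 \<and> hd p \<in> A}"
  define L where "L = {p \<in> Q. length p \<noteq> 1}"
  have ne: "\<And>p. p \<in> Q \<Longrightarrow> p \<noteq> []" using assms(2) unfolding path_system_def dipath_def by blast
  have fV: "finite V" using assms(1) unfolding digraph_def by auto
  have fQ: "finite Q" using finQ[OF assms(1,2)] .
  have fS: "finite S" "finite L" using fQ unfolding S_def L_def by auto
  have fA: "finite A" using fV assms(3) finite_subset by blast
  have "A \<subseteq> (A - path_verts Q) \<union> hd ` S \<union> (\<Union>p\<in>L. set p)"
  proof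
    fix v assume v: "v \<in> A"
    show "v \<in> (A - path_verts Q) \<union> hd ` S \<union> (\<Union>p\<in>L. set p)"
    proof (cases "v \<in> path_verts Q")
      case True
      then obtain p where p: "p \<in> Q" "v \<in> set p" unfolding path_verts_def by auto
      show ?thesis
      proof (cases "length p = 1")
        case True
        then obtain x where "p = [x]" using True by (cases p) auto
        then show ?thesis using p v True unfolding S_def by (auto intro!: image_eqI[of _ hd p])
      next
        case False
        then show ?thesis using p unfolding L_def by auto
      qed
    qed (use v in simp)
  qed
  then have "card A \<le> card ((A - path_verts Q) \<union> hd ` S \<union> (\<Union>p\<in>L. set p))"
    by (rule card_mono[rotated]) (use fA fS in simp)
  also have "\<dots> \<le> card (A - path_verts Q) + card (hd ` S) + card (\<Union>p\<in>L. set p)"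
    using card_Un_le[of "(A - path_verts Q) \<union> hd ` S" "\<Union>p\<in>L. set p"] card_Un_le[of "A - path_verts Q" "hd ` S"] by linarith
  also have "\<dots> \<le> card (A - path_verts Q) + card S + (\<Sum>p\<in>L. card (set p))"
    using card_image_le[OF fS(1), of hd] card_UN_le[OF fS(2), of set] by linarith
  also have "(\<Sum>p\<in>L. card (set p)) \<le> (\<Sum>p\<in>L. 2 * (length p - 1))"
  proof (rule sum_mono)
    fix p assume "p \<in> L"
    then have "length p \<noteq> 1" "p \<in> Q" unfolding L_def by auto
    moreover have "length p \<noteq> 0" using ne[of p] \<open>p \<in> Q\<close> by simp
    ultimately have "length p \<ge> 2" by linarith
    then show "card (set p) \<le> 2 * (length p - 1)" using card_length[of p] by linarith
  qed
  also have "\<dots> = 2 * (\<Sum>p\<in>L. length p - 1)" by (simp add: sum_distrib_left)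
  also have "(\<Sum>p\<in>L. length p - 1) \<le> num_edges Q"
    unfolding num_edges_def by (rule sum_mono2) (use fQ L_def in auto)
  also have "card (A - path_verts Q) + card S = card (Inl ` (A - path_verts Q) \<union> (Inr ` S :: ('a + 'a list) set))"
    by (subst card_Un_disjoint) (use fA fS in \<open>auto simp: card_image\<close>)
  also have "\<dots> \<le> card B"
  proof (rule card_mono)
    show "finite B" using assms(4) finV'[OF assms(1,2)] by (rule finite_subset)
    show "Inl ` (A - path_verts Q) \<union> Inr ` S \<subseteq> B" using assms(5,6) unfolding S_def by blast
  qed
  finally show ?thesis by linarith
qed




lemma len1: "length p = 1 \<Longrightarrow> last p = hd p"
  by (cases p) auto

lemma P_sub: "k2_partition k V P \<Longrightarrow> i \<in> {1..k} \<Longrightarrow> j \<in> {1..k} \<Longrightarrow> P i j \<subseteq> V"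
proof -
  assume "k2_partition k V P" "i \<in> {1..k}" "j \<in> {1..k}"
  from \<open>k2_partition k V P\<close> have U: "(\<Union>i\<in>{1..k}. \<Union>j\<in>{1..k}. P i j) = V" unfolding k2_partition_def by (rule conjunct2)
  show "P i j \<subseteq> V" unfolding U[symmetric] using \<open>i \<in> {1..k}\<close> \<open>j \<in> {1..k}\<close> by blast
qed

lemma P'_sub: "k2_partition k V P \<Longrightarrow> i \<in> {1..k} \<Longrightarrow> j \<in> {1..k} \<Longrightarrow> contract_P k P Q i j \<subseteq> contract_V V Q"
  using P_sub[of k V P i j] unfolding contract_P_def contract_V_def by blast

lemma row'_sub: "k2_partition k V P \<Longrightarrow> i \<in> {1..k} \<Longrightarrow> row k (contract_P k P Q) i \<subseteq> contract_V V Q"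
  unfolding row_def using P'_sub by blast

lemma col'_sub: "k2_partition k V P \<Longrightarrow> i \<in> {1..k} \<Longrightarrow> col k (contract_P k P Q) i \<subseteq> contract_V V Q"
  unfolding col_def using P'_sub by blast

lemma row_sub: "k2_partition k V P \<Longrightarrow> i \<in> {1..k} \<Longrightarrow> row k P i \<subseteq> V"
  unfolding row_def using P_sub by blast

lemma col_sub: "k2_partition k V P \<Longrightarrow> i \<in> {1..k} \<Longrightarrow> col k P i \<subseteq> V"
  unfolding col_def using P_sub by blast

lemma row_Inl: "Inl ` (row k P i - path_verts Q) \<subseteq> row k (contract_P k P Q) i"
  unfolding row_def contract_P_def by blast

lemma col_Inl: "Inl ` (col k P i - path_verts Q) \<subseteq> col k (contract_P k P Q) i"
  unfolding col_def contract_P_def by blast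

lemma row_Inr: assumes i: "i \<in> {1..k}" shows "Inr ` {p \<in> Q. length p = 1 \<and> hd p \<in> row k P i} \<subseteq> row k (contract_P k P Q) i"
proof
  fix x :: "'a + 'a list" assume "x \<in> Inr ` {p \<in> Q. length p = 1 \<and> hd p \<in> row k P i}"
  then obtain p where p: "x = Inr p" "p \<in> Q" "length p = 1" "hd p \<in> row k P i" by auto
  then obtain j where j: "j \<in> {1..k}" "hd p \<in> P i j" unfolding row_def by auto
  moreover note i
  ultimately have "hd p \<in> col k P j" unfolding col_def by auto
  moreover note \<open>i \<in> {1..k}\<close>
  moreover have "last p \<in> row k P i" using p len1[OF p(3)] by simp
  ultimately have "Inr p \<in> contract_P k P Q i j" using p unfolding contract_P_def by blast
  then show "x \<in> row k (contract_P k P Q) i"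
    using p j unfolding row_def by blast
qed

lemma col_Inr: assumes j0: "j \<in> {1..k}" shows "Inr ` {p \<in> Q. length p = 1 \<and> hd p \<in> col k P j} \<subseteq> col k (contract_P k P Q) j"
proof
  fix x :: "'a + 'a list" assume "x \<in> Inr ` {p \<in> Q. length p = 1 \<and> hd p \<in> col k P j}"
  then obtain p where p: "x = Inr p" "p \<in> Q" "length p = 1" "hd p \<in> col k P j" by auto
  then obtain i where i: "i \<in> {1..k}" "hd p \<in> P i j" unfolding col_def by auto
  moreover note j0
  ultimately have "last p \<in> row k P i" using len1[OF p(3)] unfolding row_def by auto
  moreover note \<open>j \<in> {1..k}\<close>
  ultimately have "Inr p \<in> contract_P k P Q i j" using p unfolding contract_P_def by blast
  then show "x \<in> col k (contract_P k P Q) j"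
    using p i unfolding col_def by blast
qed

lemma P_disj: "k2_partition k V P \<Longrightarrow> a \<in> {1..k} \<Longrightarrow> b \<in> {1..k} \<Longrightarrow> c \<in> {1..k} \<Longrightarrow> d \<in> {1..k} \<Longrightarrow>
  (a, b) \<noteq> (c, d) \<Longrightarrow> P a b \<inter> P c d = {}"
  unfolding k2_partition_def by (elim conjE, drule bspec[of _ _ a], assumption, drule bspec[of _ _ b], assumption,
    drule bspec[of _ _ c], assumption, drule bspec[of _ _ d], assumption, erule mp, assumption)

lemma row_disj: "k2_partition k V P \<Longrightarrow> i \<in> {1..k} \<Longrightarrow> i' \<in> {1..k} \<Longrightarrow> i \<noteq> i' \<Longrightarrow>
  row k P i \<inter> row k P i' = {}"
proof -
  assume a: "k2_partition k V P" "i \<in> {1..k}" "i' \<in> {1..k}" "i \<noteq> i'"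
  show ?thesis
  proof (rule equals0I)
    fix v assume "v \<in> row k P i \<inter> row k P i'"
    then obtain j j' where "j \<in> {1..k}" "j' \<in> {1..k}" "v \<in> P i j" "v \<in> P i' j'" unfolding row_def by blast
    then show False using P_disj[OF a(1,2) \<open>j \<in> {1..k}\<close> a(3) \<open>j' \<in> {1..k}\<close>] a(4) by blast
  qed
qed

lemma col_disj: "k2_partition k V P \<Longrightarrow> i \<in> {1..k} \<Longrightarrow> i' \<in> {1..k} \<Longrightarrow> i \<noteq> i' \<Longrightarrow>
  col k P i \<inter> col k P i' = {}"
proof -
  assume a: "k2_partition k V P" "i \<in> {1..k}" "i' \<in> {1..k}" "i \<noteq> i'"
  show ?thesis
  proof (rule equals0I)
    fix v assume "v \<in> col k P i \<inter> col k P i'"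
    then obtain j j' where "j \<in> {1..k}" "j' \<in> {1..k}" "v \<in> P j i" "v \<in> P j' i'" unfolding col_def by blast
    then show False using P_disj[OF a(1) \<open>j \<in> {1..k}\<close> a(2) \<open>j' \<in> {1..k}\<close> a(3)] a(4) by blast
  qed
qed

lemma partition':
  assumes "k2_partition k V P" "path_system V E Q"
  shows "k2_partition k (contract_V V Q) (contract_P k P Q)"
  unfolding k2_partition_def
proof (intro conjI ballI impI)
  fix i j i' j' assume ij: "i \<in> {1..k}" "j \<in> {1..k}" "i' \<in> {1..k}" "j' \<in> {1..k}" "(i, j) \<noteq> (i', j')"
  have "P i j \<inter> P i' j' = {}" using P_disj[OF assms(1) ij] .
  moreover have "\<And>p. p \<in> Q \<Longrightarrow> hd p \<in> col k P j \<Longrightarrow> last p \<in> row k P i \<Longrightarrow>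
      hd p \<in> col k P j' \<Longrightarrow> last p \<in> row k P i' \<Longrightarrow> False"
    using row_disj[OF assms(1), of i i'] col_disj[OF assms(1), of j j'] ij by blast
  ultimately show "contract_P k P Q i j \<inter> contract_P k P Q i' j' = {}"
    unfolding contract_P_def by blast
next
  have ne: "\<And>p. p \<in> Q \<Longrightarrow> p \<noteq> [] \<and> set p \<subseteq> V" using assms(2) unfolding path_system_def dipath_def by blast
  show "(\<Union>i\<in>{1..k}. \<Union>j\<in>{1..k}. contract_P k P Q i j) = contract_V V Q"
  proof
    show "(\<Union>i\<in>{1..k}. \<Union>j\<in>{1..k}. contract_P k P Q i j) \<subseteq> contract_V V Q"
      using P'_sub[OF assms(1)] by blast
    show "contract_V V Q \<subseteq> (\<Union>i\<in>{1..k}. \<Union>j\<in>{1..k}. contract_P k P Q i j)"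
    proof
      fix x assume "x \<in> contract_V V Q"
      then consider v where "x = Inl v" "v \<in> V" "v \<notin> path_verts Q" | p where "x = Inr p" "p \<in> Q"
        unfolding contract_V_def by blast
      then show "x \<in> (\<Union>i\<in>{1..k}. \<Union>j\<in>{1..k}. contract_P k P Q i j)"
      proof cases
        case 1
        then obtain i j where "i \<in> {1..k}" "j \<in> {1..k}" "v \<in> P i j"
          using assms(1) unfolding k2_partition_def by blast
        then show ?thesis using 1 unfolding contract_P_def by blast
      next
        case 2
        then have "hd p \<in> V" "last p \<in> V" using ne[of p] by auto
        then obtain i j i' j' where "i \<in> {1..k}" "j \<in> {1..k}" "hd p \<in> P i j"
          "i' \<in> {1..k}" "j' \<in> {1..k}" "last p \<in> P i' j'"
          using assms(1) unfolding k2_partition_def by blast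
        then have "hd p \<in> col k P j" "last p \<in> row k P i'" unfolding col_def row_def by auto
        then show ?thesis using 2 \<open>j \<in> {1..k}\<close> \<open>i' \<in> {1..k}\<close> unfolding contract_P_def by blast
      qed
    qed
  qed
qed




theorem proposition4p9:
  shows "\<forall>\<tau>::real. 0 < \<tau> \<and> \<tau> \<le> 1 \<longrightarrow>
    (\<exists>\<delta>>0. \<forall>\<theta> \<gamma>::real. 0 < \<theta> \<and> \<theta> \<le> \<delta> \<and> 0 < \<gamma> \<and> \<gamma> \<le> \<delta> \<longrightarrow>
      (\<exists>n0::nat. \<forall>n\<ge>n0. \<forall>(k::nat) (V::'a set) E Q P.
         digraph V E \<and> card V = n \<and> path_system V E Q \<and> k2_partition k V P \<longrightarrow>
         card (bad_edges k (contract_P k P Q) (contract_E V E Q)) \<le> card (bad_edges k P E) \<and>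
         (k2_tau_gamma_partition k \<tau> \<gamma> V E P \<and> real (num_edges Q) \<le> \<theta> * real n \<longrightarrow>
          k2_tau_gamma_partition k (\<tau> / 2) (2 * \<gamma>) (contract_V V Q) (contract_E V E Q)
            (contract_P k P Q))))"
proof (intro allI impI)
  fix \<tau> :: real assume t: "0 < \<tau> \<and> \<tau> \<le> 1"
  show "\<exists>\<delta>>0. \<forall>\<theta> \<gamma>::real. 0 < \<theta> \<and> \<theta> \<le> \<delta> \<and> 0 < \<gamma> \<and> \<gamma> \<le> \<delta> \<longrightarrow>
      (\<exists>n0::nat. \<forall>n\<ge>n0. \<forall>(k::nat) (V::'a set) E Q P.
         digraph V E \<and> card V = n \<and> path_system V E Q \<and> k2_partition k V P \<longrightarrow>
         card (bad_edges k (contract_P k P Q) (contract_E V E Q)) \<le> card (bad_edges k P E) \<and>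
         (k2_tau_gamma_partition k \<tau> \<gamma> V E P \<and> real (num_edges Q) \<le> \<theta> * real n \<longrightarrow>
          k2_tau_gamma_partition k (\<tau> / 2) (2 * \<gamma>) (contract_V V Q) (contract_E V E Q)
            (contract_P k P Q)))"
  proof (rule exI[of _ "\<tau> / 4"], intro conjI allI impI)
    show "0 < \<tau> / 4" using t by simp
    fix \<theta> \<gamma> :: real assume tg: "0 < \<theta> \<and> \<theta> \<le> \<tau> / 4 \<and> 0 < \<gamma> \<and> \<gamma> \<le> \<tau> / 4"
    show "\<exists>n0::nat. \<forall>n\<ge>n0. \<forall>(k::nat) (V::'a set) E Q P.
         digraph V E \<and> card V = n \<and> path_system V E Q \<and> k2_partition k V P \<longrightarrow>
         card (bad_edges k (contract_P k P Q) (contract_E V E Q)) \<le> card (bad_edges k P E) \<and>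
         (k2_tau_gamma_partition k \<tau> \<gamma> V E P \<and> real (num_edges Q) \<le> \<theta> * real n \<longrightarrow>
          k2_tau_gamma_partition k (\<tau> / 2) (2 * \<gamma>) (contract_V V Q) (contract_E V E Q)
            (contract_P k P Q))"
    proof (rule exI[of _ 0], intro allI impI conjI)
      fix n k and V :: "'a set" and E Q P
      assume H: "digraph V E \<and> card V = n \<and> path_system V E Q \<and> k2_partition k V P"
      then have dg: "digraph V E" and cV: "card V = n" and ps: "path_system V E Q"
        and kp: "k2_partition k V P" by auto
      show p1: "card (bad_edges k (contract_P k P Q) (contract_E V E Q)) \<le> card (bad_edges k P E)"
        by (rule part1[OF dg ps])
      assume H2: "k2_tau_gamma_partition k \<tau> \<gamma> V E P \<and> real (num_edges Q) \<le> \<theta> * real n"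
      then have bad: "real (card (bad_edges k P E)) \<le> \<gamma> * real n ^ 2"
        and rows: "\<forall>i\<in>{1..k}. real (card (row k P i)) \<ge> \<tau> * real n"
        and cols: "\<forall>j\<in>{1..k}. real (card (col k P j)) \<ge> \<tau> * real n"
        and eQ: "real (num_edges Q) \<le> \<theta> * real n"
        unfolding k2_tau_gamma_partition_def using cV by auto
      define n' where "n' = card (contract_V V Q)"
      have n'le: "real n' \<le> real n" using cardV'_le[OF dg ps] cV n'_def by simp
      have n'ge: "real n \<le> real n' + real (num_edges Q)" using cardV'_ge[OF dg ps] cV n'_def by linarith
      have tn: "\<theta> * real n \<le> \<tau> / 4 * real n" using tg by (intro mult_right_mono) auto
      have "\<tau> / 4 * real n \<le> 1 / 4 * real n" using t by (intro mult_right_mono) auto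
      then have n'3: "3 / 4 * real n \<le> real n'" using n'ge eQ tn by linarith
      have sq: "(3 / 4 * real n) ^ 2 \<le> real n' ^ 2"
        by (rule power_mono[OF n'3]) simp
      have "\<gamma> * real n ^ 2 \<le> 2 * \<gamma> * real n' ^ 2"
      proof -
        have "(3 / 4 * real n) ^ 2 = 9 / 16 * real n ^ 2" by (simp add: power2_eq_square)
        then have "real n ^ 2 \<le> 2 * real n' ^ 2" using sq zero_le_power2[of "real n"] by linarith
        then have "\<gamma> * real n ^ 2 \<le> \<gamma> * (2 * real n' ^ 2)" using tg by (intro mult_left_mono) auto
        then show ?thesis by (simp add: mult.assoc mult.left_commute)
      qed
      then have b2: "real (card (bad_edges k (contract_P k P Q) (contract_E V E Q))) \<le> 2 * \<gamma> * real n' ^ 2"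
      proof -
        have "real (card (bad_edges k (contract_P k P Q) (contract_E V E Q))) \<le> real (card (bad_edges k P E))"
          using p1 by (rule of_nat_mono)
        then show ?thesis using bad \<open>\<gamma> * real n ^ 2 \<le> 2 * \<gamma> * real n' ^ 2\<close> by linarith
      qed
      have key: "\<tau> / 2 * real n' \<le> real c' " if "real c \<ge> \<tau> * real n" "c \<le> c' + 2 * num_edges Q" for c c' :: nat
      proof -
        have "real c \<le> real c' + 2 * real (num_edges Q)" using that(2) by linarith
        moreover have "\<tau> / 2 * real n' \<le> \<tau> / 2 * real n" using n'le t by (intro mult_left_mono) auto
        ultimately show ?thesis using that(1) eQ tn by linarith
      qed
      show "k2_tau_gamma_partition k (\<tau> / 2) (2 * \<gamma>) (contract_V V Q) (contract_E V E Q) (contract_P k P Q)"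
        unfolding k2_tau_gamma_partition_def
      proof (intro conjI ballI)
        show "k2_partition k (contract_V V Q) (contract_P k P Q)" by (rule partition'[OF kp ps])
        show "real (card (bad_edges k (contract_P k P Q) (contract_E V E Q))) \<le> 2 * \<gamma> * real (card (contract_V V Q)) ^ 2"
          using b2 n'_def by simp
        fix i assume i: "i \<in> {1..k}"
        show "\<tau> / 2 * real (card (contract_V V Q)) \<le> real (card (row k (contract_P k P Q) i))"
          unfolding n'_def[symmetric]
          by (rule key[OF bspec[OF rows i] row_bound[OF dg ps row_sub[OF kp i] row'_sub[OF kp i] row_Inl row_Inr[OF i]]])
      next
        fix j assume j: "j \<in> {1..k}"
        show "\<tau> / 2 * real (card (contract_V V Q)) \<le> real (card (col k (contract_P k P Q) j))"
          unfolding n'_def[symmetric]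
          by (rule key[OF bspec[OF cols j] row_bound[OF dg ps col_sub[OF kp j] col'_sub[OF kp j] col_Inl col_Inr[OF j]]])
      qed
    qed
  qed
qed


end
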